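(* Let $m\ge n$, let $A$ be an $m\times n$ complex matrix of full rank $n$, and let $Z$ be an $m\times(m-n)$ matrix whose columns form a basis of $R(A)^\perp$. For $\mu>0$ let $C_\mu=\{z\in\mathbb{C}: |\mathrm{Im}\,z|\le\mu\,\mathrm{Re}\,z,\ z\neq0\}$, let $\mathcal{D}_\mu$ be the set of $m\times m$ diagonal matrices with all diagonal entries in $C_\mu$, and for a full column rank $m\times k$ matrix $B$ set $\chi(B,\mu)=\sup_{D\in\mathcal{D}_\mu}\|B(B^*DB)^{-1}B^*D\|$. Then $\chi(A,\mu)=\chi(Z,\mu)$ for every $\mu>0$.
   Context: Norms are operator norms induced by the Euclidean norm; $R(\cdot)$ denotes the range (column space). *)

theory Defs
  imports "HOL-Analysis.Analysis"
begin

definition ctrans :: "complex^'k^'m \<Rightarrow> complex^'m^'k" where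
  "ctrans B = (\<chi> i j. cnj (B $ j $ i))"

definition cinner :: "complex^'m \<Rightarrow> complex^'m \<Rightarrow> complex" where
  "cinner x y = (\<Sum>i\<in>UNIV. cnj (x $ i) * y $ i)"

definition col_range :: "complex^'k^'m \<Rightarrow> (complex^'m) set" where
  "col_range B = range (\<lambda>x. B *v x)"

definition corth :: "(complex^'m) set \<Rightarrow> (complex^'m) set" where
  "corth S = {x. \<forall>y\<in>S. cinner y x = 0}"

definition diag_mat :: "complex^'m \<Rightarrow> complex^'m^'m" where
  "diag_mat d = (\<chi> i j. if i = j then d $ i else 0)"

definition sector :: "real \<Rightarrow> complex set" where
  "sector \<mu> = {z. \<bar>Im z\<bar> \<le> \<mu> * Re z \<and> z \<noteq> 0}"

definition Dset :: "real \<Rightarrow> (complex^'m^'m) set" where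
  "Dset \<mu> = {diag_mat d | d. \<forall>i. d $ i \<in> sector \<mu>}"

definition opnorm :: "complex^'a^'b \<Rightarrow> real" where
  "opnorm M = onorm (\<lambda>x. M *v x)"

definition chi :: "complex^'k^'m \<Rightarrow> real \<Rightarrow> ereal" where
  "chi B \<mu> = (SUP D\<in>Dset \<mu>.
      ereal (opnorm (B ** matrix_inv (ctrans B ** D ** B) ** ctrans B ** D)))"

end

theory Submission imports Defs begin

lemma rank_inj:
  fixes A :: "complex^'n^'m"
  assumes "rank A = CARD('n)"
  shows "inj ((*v) A)"
proof -
  have "vec.span (rows A) = UNIV"
    using assms unfolding row_rank_def_gen
    by (simp add: vec.dim_eq_full[symmetric] card_cart_basis vec.dimension_def)
  then show ?thesis
    by (metis matrix_left_invertible_span_rows_gen matrix_left_invertible_injective)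
qed

lemma inner_cinner: "inner x y = Re (cinner x y)" for x y :: "complex^'m"
  by (simp add: inner_vec_def cinner_def Re_sum inner_complex_def)

lemma cinner_adj: "cinner (B *v x) y = cinner x (ctrans B *v y)"
  for B :: "complex^'k^'m"
proof -
  have e1: "cinner (B *v x) y = (\<Sum>i\<in>UNIV. cnj (\<Sum>j\<in>UNIV. B $ i $ j * x $ j) * y $ i)"
    by (simp add: cinner_def matrix_vector_mult_def)
  have e2: "cinner x (ctrans B *v y) = (\<Sum>j\<in>UNIV. cnj (x $ j) * (\<Sum>i\<in>UNIV. cnj (B $ i $ j) * y $ i))"
    by (simp add: cinner_def ctrans_def matrix_vector_mult_def)
  have "(\<Sum>i\<in>UNIV. cnj (\<Sum>j\<in>UNIV. B $ i $ j * x $ j) * y $ i)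
      = (\<Sum>i\<in>UNIV. \<Sum>j\<in>UNIV. cnj (x $ j) * (cnj (B $ i $ j) * y $ i))"
    by (simp add: cnj_sum sum_distrib_left sum_distrib_right mult.commute mult.left_commute)
  also have "\<dots> = (\<Sum>j\<in>UNIV. \<Sum>i\<in>UNIV. cnj (x $ j) * (cnj (B $ i $ j) * y $ i))"
    by (rule sum.swap)
  also have "\<dots> = (\<Sum>j\<in>UNIV. cnj (x $ j) * (\<Sum>i\<in>UNIV. cnj (B $ i $ j) * y $ i))"
    by (simp add: sum_distrib_left)
  finally show ?thesis using e1 e2 by simp
qed

lemma onorm_adj:
  fixes X :: "'a::euclidean_space \<Rightarrow> 'b::euclidean_space" and Y :: "'b \<Rightarrow> 'a"
  assumes "bounded_linear X" "bounded_linear Y" "\<And>x y. inner (X x) y = inner x (Y y)"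
  shows "onorm X \<le> onorm Y"
proof (rule onorm_le)
  fix x
  show "norm (X x) \<le> onorm Y * norm x"
  proof (cases "X x = 0")
    case True then show ?thesis using onorm_pos_le[OF assms(2)] by simp
  next
    case False
    have "norm (X x) ^ 2 = inner x (Y (X x))" by (simp add: power2_norm_eq_inner assms(3))
    also have "\<dots> \<le> norm x * norm (Y (X x))" by (rule norm_cauchy_schwarz)
    also have "\<dots> \<le> norm x * (onorm Y * norm (X x))"
      by (simp add: mult_left_mono onorm[OF assms(2)])
    finally have "norm (X x) * norm (X x) \<le> (norm x * onorm Y) * norm (X x)"
      by (simp add: power2_eq_square mult_ac)
    then show ?thesis using False by (simp add: mult_ac)
  qed
qed



lemma proj_norm:
  fixes P :: "'a::euclidean_space \<Rightarrow> 'a"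
  assumes bl: "bounded_linear P" and idem: "\<And>x. P (P x) = P x" and w: "P w \<noteq> 0"
  shows "onorm (\<lambda>x. x - P x) \<le> onorm P"
proof (rule onorm_le)
  fix x
  interpret P: bounded_linear P by (rule bl)
  have o1: "1 \<le> onorm P"
  proof -
    have "norm (P w) \<le> onorm P * norm (P w)" using onorm[OF bl, of "P w"] idem by simp
    then show ?thesis using w by simp
  qed
  define u where "u = P x"
  define v where "v = x - P x"
  have xuv: "x = u + v" by (simp add: u_def v_def)
  have Pu: "P u = u" by (simp add: u_def idem)
  have Pv: "P v = 0" by (simp add: v_def P.diff idem)
  show "norm (x - P x) \<le> onorm P * norm x"
  proof (cases "v = 0")
    case True then show ?thesis using onorm_pos_le[OF bl] by (simp add: v_def[symmetric])
  next
    case vnz: False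
    show ?thesis
    proof (cases "u = 0")
      case True
      then have "x - P x = x" by (simp add: u_def)
      then show ?thesis using mult_right_mono[OF o1 norm_ge_zero[of x]] by simp
    next
      case unz: False
      define a where "a = norm u"
      define b where "b = norm v"
      have a0: "a > 0" "b > 0" using unz vnz by (auto simp: a_def b_def)
      define y where "y = (b/a) *\<^sub>R u + (a/b) *\<^sub>R v"
      have Py: "P y = (b/a) *\<^sub>R u" by (simp add: y_def P.add P.scaleR Pu Pv)
      have nPy: "norm (P y) = b" using a0 by (simp add: Py a_def)
      have "inner y y = (b/a)^2 * inner u u + (a/b)^2 * inner v v + 2 * ((b/a)*(a/b)) * inner u v"
        by (simp add: y_def inner_add_left inner_add_right inner_commute power2_eq_square algebra_simps)
      also have "\<dots> = b^2 + a^2 + 2 * inner u v"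
        using a0 by (simp add: dot_square_norm a_def[symmetric] b_def[symmetric] field_simps)
      also have "\<dots> = inner x x"
        by (simp add: xuv a_def b_def power2_norm_eq_inner inner_add_left inner_add_right inner_commute)
      finally have "norm y = norm x" by (simp add: norm_eq_sqrt_inner)
      then have "b \<le> onorm P * norm x" using onorm[OF bl, of y] nPy by simp
      then show ?thesis by (simp add: b_def v_def)
    qed
  qed
qed


lemma ctrans_ctrans[simp]: "ctrans (ctrans B) = B"
  by (simp add: ctrans_def vec_eq_iff)

lemma diag_mv: "diag_mat d *v z = (\<chi> i. d $ i * z $ i)"
  by (simp add: diag_mat_def matrix_vector_mult_def vec_eq_iff if_distrib if_distribR cong: if_cong)

lemma cnj_self: "cnj w * w = complex_of_real ((cmod w)^2)"
  by (metis complex_norm_square mult.commute)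

lemma cinner_add_right: "cinner x (y + z) = cinner x y + cinner x z"
  by (simp add: cinner_def distrib_left sum.distrib)

lemma cinner_diff_right: "cinner x (y - z) = cinner x y - cinner x z"
  by (simp add: cinner_def right_diff_distrib sum_subtractf)

lemma cinner_smult_left: "cinner (c *s x) y = cnj c * cinner x y"
  by (simp add: cinner_def sum_distrib_left mult_ac)

lemma mv_smult: "B *v (c *s x) = c *s (B *v x)" for B :: "complex^'k^'m"
  by (simp add: matrix_vector_mult_def vec_eq_iff sum_distrib_left mult_ac)

lemma cinner_self_zero: "cinner z z = 0 \<Longrightarrow> z = 0" for z :: "complex^'m"
proof -
  assume h: "cinner z z = 0"
  have "cinner z z = (\<Sum>i\<in>UNIV. complex_of_real ((cmod (z $ i))^2))"
    by (simp only: cinner_def cnj_self)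
  then have "(\<Sum>i\<in>UNIV. (cmod (z $ i))^2) = 0" using h
    by (metis of_real_eq_0_iff of_real_sum)
  then have "\<forall>i. (cmod (z $ i))^2 = 0" by (simp add: sum_nonneg_eq_0_iff)
  then show "z = 0" by (simp add: vec_eq_iff)
qed

lemma corth_col_range:
  fixes B :: "complex^'k^'m"
  shows "corth (col_range B) = orthogonal_comp (col_range B)"
proof safe
  fix x assume "x \<in> corth (col_range B)"
  then show "x \<in> orthogonal_comp (col_range B)"
    by (auto simp: corth_def orthogonal_comp_def orthogonal_def inner_cinner)
next
  fix x assume x: "x \<in> orthogonal_comp (col_range B)"
  show "x \<in> corth (col_range B)"
    unfolding corth_def col_range_def
  proof safe
    fix s
    have r1: "Re (cinner (B *v s) x) = 0" using x
      by (auto simp: orthogonal_comp_def orthogonal_def inner_cinner col_range_def)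
    have "Re (cinner (B *v (\<i> *s s)) x) = 0" using x
      by (auto simp: orthogonal_comp_def orthogonal_def inner_cinner col_range_def)
    then have r2: "Im (cinner (B *v s) x) = 0"
      by (simp add: mv_smult cinner_smult_left)
    show "cinner (B *v s) x = 0" using r1 r2 by (simp add: complex_eq_iff)
  qed
qed

lemma subspace_col_range: "subspace (col_range B)" for B :: "complex^'k^'m"
  unfolding col_range_def
  by (rule linear_subspace_image[OF bounded_linear.linear[OF matrix_vector_mul_bounded_linear] subspace_UNIV])

lemma inv_props:
  fixes G :: "complex^'n^'n"
  assumes "invertible G"
  shows "matrix_inv G ** G = mat 1" "G ** matrix_inv G = mat 1"
  using someI_ex[OF assms[unfolded invertible_def]] unfolding matrix_inv_def by auto

lemma gram_invertible:
  fixes B :: "complex^'k^'m"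
  assumes inj: "inj ((*v) B)" and d: "\<And>i. Re (d $ i) > 0"
  shows "invertible (ctrans B ** diag_mat d ** B)"
proof -
  have "\<forall>w. (ctrans B ** diag_mat d ** B) *v w = 0 \<longrightarrow> w = 0"
  proof safe
    fix w assume h: "(ctrans B ** diag_mat d ** B) *v w = 0"
    define z where "z = B *v w"
    have "cinner z (diag_mat d *v z) = cinner w ((ctrans B ** diag_mat d ** B) *v w)"
      by (simp add: z_def cinner_adj matrix_vector_mul_assoc[symmetric])
    also have "\<dots> = 0" by (simp add: h cinner_def)
    finally have "cinner z (diag_mat d *v z) = 0" .
    moreover have "cinner z (diag_mat d *v z) = (\<Sum>i\<in>UNIV. d $ i * (cnj (z $ i) * z $ i))"
      by (simp add: cinner_def diag_mv mult_ac)
    ultimately have "(\<Sum>i\<in>UNIV. d $ i * complex_of_real ((cmod (z $ i))^2)) = 0"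
      by (simp only: cnj_self)
    then have "Re (\<Sum>i\<in>UNIV. d $ i * complex_of_real ((cmod (z $ i))^2)) = 0" by simp
    then have "(\<Sum>i\<in>UNIV. Re (d $ i) * (cmod (z $ i))^2) = 0" by (simp add: Re_sum)
    moreover have "\<forall>i\<in>UNIV. 0 \<le> Re (d $ i) * (cmod (z $ i))^2"
      using d by (simp add: less_imp_le)
    ultimately have "\<forall>i. Re (d $ i) * (cmod (z $ i))^2 = 0"
      by (simp add: sum_nonneg_eq_0_iff)
    then have "z = 0" using d by (simp add: vec_eq_iff) (metis less_irrefl)
    then show "w = 0" using inj unfolding z_def
      by (metis inj_eq matrix_vector_mult_0_right)
  qed
  then show ?thesis
    by (metis invertible_left_inverse matrix_left_invertible_ker(1))
qed



lemma cinner_zero_right: "cinner x 0 = 0"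
  by (simp add: cinner_def)

lemma DE:
  assumes d: "\<And>i. Re (d $ i) > 0"
    and e: "\<And>i. e $ i = 1 / cnj (d $ i)"
  shows "ctrans (diag_mat d) *v (diag_mat e *v r) = r"
proof -
  have c: "ctrans (diag_mat d) = diag_mat (\<chi> i. cnj (d $ i))"
    by (simp add: ctrans_def diag_mat_def vec_eq_iff)
  have "d $ i \<noteq> 0" for i using d[of i] by auto
  then show ?thesis by (simp add: c diag_mv e vec_eq_iff)
qed


lemma key:
  fixes A :: "complex^'n^'m" and Z :: "complex^'k^'m"
  assumes injA: "inj ((*v) A)" and injZ: "inj ((*v) Z)"
    and orth: "col_range Z = corth (col_range A)"
    and d: "\<And>i. Re (d $ i) > 0"
    and e: "\<And>i. e $ i = 1 / cnj (d $ i)"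
  shows "opnorm (A ** matrix_inv (ctrans A ** diag_mat d ** A) ** ctrans A ** diag_mat d)
       = opnorm (Z ** matrix_inv (ctrans Z ** diag_mat e ** Z) ** ctrans Z ** diag_mat e)"
proof -
  define D where "D = diag_mat d"
  define E where "E = diag_mat e"
  define G where "G = ctrans A ** D ** A"
  define H where "H = ctrans Z ** E ** Z"
  define Gi where "Gi = matrix_inv G"
  define Hi where "Hi = matrix_inv H"
  define Pm where "Pm = A ** Gi ** ctrans A ** D"
  define Mm where "Mm = Z ** Hi ** ctrans Z ** E"
  have e': "Re (e $ i) > 0" for i
  proof -
    have "0 < Re (d $ i)" by (rule d)
    moreover then have "0 < (Re (d $ i))\<^sup>2 + (Im (d $ i))\<^sup>2" by (simp add: add_pos_nonneg)
    ultimately show ?thesis by (simp add: e Re_divide)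
  qed
  have invG: "invertible G" unfolding G_def D_def by (rule gram_invertible[OF injA d])
  have invH: "invertible H" unfolding H_def E_def by (rule gram_invertible[OF injZ e'])
  have GiG: "\<And>w. Gi *v (G *v w) = w"
    using inv_props(1)[OF invG] by (simp add: Gi_def matrix_vector_mul_assoc)
  have GGi: "\<And>w. G *v (Gi *v w) = w"
    using inv_props(2)[OF invG] by (simp add: Gi_def matrix_vector_mul_assoc)
  have HiH: "\<And>w. Hi *v (H *v w) = w"
    using inv_props(1)[OF invH] by (simp add: Hi_def matrix_vector_mul_assoc)
  have HHi: "\<And>w. H *v (Hi *v w) = w"
    using inv_props(2)[OF invH] by (simp add: Hi_def matrix_vector_mul_assoc)
  have Gv: "\<And>w. G *v w = ctrans A *v (D *v (A *v w))"
    by (simp add: G_def matrix_vector_mul_assoc matrix_mul_assoc)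
  have Hv: "\<And>w. H *v w = ctrans Z *v (E *v (Z *v w))"
    by (simp add: H_def matrix_vector_mul_assoc matrix_mul_assoc)
  have Pv: "\<And>x. Pm *v x = A *v (Gi *v (ctrans A *v (D *v x)))"
    by (simp add: Pm_def matrix_vector_mul_assoc matrix_mul_assoc)
  have Mv: "\<And>x. Mm *v x = Z *v (Hi *v (ctrans Z *v (E *v x)))"
    by (simp add: Mm_def matrix_vector_mul_assoc matrix_mul_assoc)
  have DE: "\<And>r. ctrans D *v (E *v r) = r"
    unfolding D_def E_def by (rule DE[OF d e])
  have orthAZ: "\<And>x s. cinner (A *v x) (Z *v s) = 0"
  proof -
    fix x s
    have "Z *v s \<in> corth (col_range A)" using orth by (auto simp: col_range_def)
    then show "cinner (A *v x) (Z *v s) = 0" by (auto simp: corth_def col_range_def)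
  qed
  have kerZ: "\<And>y. ctrans Z *v y = 0 \<Longrightarrow> y \<in> col_range A"
  proof -
    fix y assume h: "ctrans Z *v y = 0"
    have "y \<in> corth (col_range Z)"
      using h by (auto simp: corth_def col_range_def cinner_adj cinner_zero_right)
    also have "corth (col_range Z) = orthogonal_comp (col_range Z)"
      by (rule corth_col_range)
    also have "\<dots> = orthogonal_comp (orthogonal_comp (col_range A))"
      using orth by (simp add: corth_col_range)
    also have "\<dots> = col_range A" by (rule orthogonal_comp_self[OF subspace_col_range])
    finally show "y \<in> col_range A" .
  qed
  have main: "\<And>x y. cinner (Pm *v x) y = cinner x (y - Mm *v y)"
  proof -
    fix x y
    define w where "w = Gi *v (ctrans A *v (D *v x))"
    define r where "r = y - Mm *v y"
    have Px: "Pm *v x = A *v w" by (simp add: Pv w_def)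
    have Gw: "G *v w = ctrans A *v (D *v x)" by (simp add: w_def GGi)
    have "ctrans Z *v (E *v r) = 0"
      by (simp add: r_def Mv matrix_vector_right_distrib matrix_vector_mult_diff_distrib
          Hv[symmetric] HHi)
    then obtain v where v: "E *v r = A *v v" using kerZ by (auto simp: col_range_def)
    have rv: "r = ctrans D *v (A *v v)" using DE[of r] v by simp
    have yr: "y = Mm *v y + r" by (simp add: r_def)
    have "cinner (Pm *v x) y = cinner (A *v w) (Mm *v y + r)"
      using yr Px by metis
    also have "\<dots> = cinner (A *v w) r"
      by (simp add: cinner_add_right Mv orthAZ)
    also have "\<dots> = cinner (D *v (A *v w)) (A *v v)"
      by (simp add: rv cinner_adj)
    also have "\<dots> = cinner (ctrans A *v (D *v (A *v w))) v"
      using cinner_adj[of "ctrans A" "D *v (A *v w)" v] by simp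
    also have "\<dots> = cinner (ctrans A *v (D *v x)) v"
      using Gw Gv by simp
    also have "\<dots> = cinner (D *v x) (A *v v)"
      using cinner_adj[of "ctrans A" "D *v x" v] by simp
    also have "\<dots> = cinner x r"
      by (simp add: rv cinner_adj)
    finally show "cinner (Pm *v x) y = cinner x (y - Mm *v y)" by (simp add: r_def)
  qed
  define X where "X = (\<lambda>x. x - Pm *v x)"
  have blP: "bounded_linear ((*v) Pm)" by simp
  have blM: "bounded_linear ((*v) Mm)" by simp
  have blX: "bounded_linear X" unfolding X_def
    by (intro bounded_linear_sub bounded_linear_ident blP)
  have rmain: "inner (X x) y = inner x (Mm *v y)" for x y
  proof -
    have "inner (Pm *v x) y = inner x (y - Mm *v y)"
      by (simp add: inner_cinner main)
    then show ?thesis by (simp add: X_def inner_diff_left inner_diff_right)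
  qed
  have n1: "onorm X \<le> onorm ((*v) Mm)" by (rule onorm_adj[OF blX blM rmain])
  have n2: "onorm ((*v) Mm) \<le> onorm X"
    by (rule onorm_adj[OF blM blX]) (metis rmain inner_commute)
  have idem: "Pm *v (Pm *v x) = Pm *v x" for x
    by (simp add: Pv Gv[symmetric] GiG)
  define s0 where "s0 = (axis undefined 1 :: complex^'n)"
  have "A *v s0 \<noteq> 0"
  proof
    assume "A *v s0 = 0"
    then have "A *v s0 = A *v 0" by simp
    then have "s0 = 0" using injA by (meson injD)
    then show False by (metis s0_def axis_nth one_neq_zero zero_index)
  qed
  moreover have "Pm *v (A *v s0) = A *v s0" by (simp add: Pv Gv[symmetric] GiG)
  ultimately have Pnz: "Pm *v (A *v s0) \<noteq> 0" by simp
  have i1: "onorm X \<le> onorm ((*v) Pm)"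
    unfolding X_def by (rule proj_norm[OF blP idem Pnz])
  have Xidem: "X (X x) = X x" for x
    by (simp add: X_def matrix_vector_mult_diff_distrib idem)
  define t0 where "t0 = (axis undefined 1 :: complex^'k)"
  have Zt: "Z *v t0 \<noteq> 0"
  proof
    assume "Z *v t0 = 0"
    then have "Z *v t0 = Z *v 0" by simp
    then have "t0 = 0" using injZ by (meson injD)
    then show False by (metis t0_def axis_nth one_neq_zero zero_index)
  qed
  have MZ: "Mm *v (Z *v t0) = Z *v t0" by (simp add: Mv Hv[symmetric] HiH)
  have "\<exists>w. X w \<noteq> 0"
  proof (rule ccontr)
    assume "\<not> (\<exists>w. X w \<noteq> 0)"
    then have "\<forall>x. X x = 0" by auto
    then have "inner (Z *v t0) (Mm *v (Z *v t0)) = 0" using rmain[of "Z *v t0" "Z *v t0"] by simp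
    then have "inner (Z *v t0) (Z *v t0) = 0" by (simp add: MZ)
    then show False using Zt by simp
  qed
  then obtain w where Xw: "X w \<noteq> 0" by auto
  have i2: "onorm (\<lambda>x. x - X x) \<le> onorm X" by (rule proj_norm[OF blX Xidem Xw])
  have "(\<lambda>x. x - X x) = (*v) Pm" by (simp add: X_def fun_eq_iff)
  with i2 have i2': "onorm ((*v) Pm) \<le> onorm X" by simp
  have "opnorm Pm = opnorm Mm"
    unfolding opnorm_def using i1 i2' n1 n2 by simp
  then show ?thesis by (simp add: Pm_def Mm_def Gi_def G_def D_def Hi_def H_def E_def)
qed



lemma sec_pos: "\<mu> > 0 \<Longrightarrow> z \<in> sector \<mu> \<Longrightarrow> Re z > 0"
proof (rule ccontr)
  assume mu: "\<mu> > 0" and z: "z \<in> sector \<mu>" and n: "\<not> Re z > 0"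
  have h: "\<bar>Im z\<bar> \<le> \<mu> * Re z" "z \<noteq> 0" using z by (auto simp: sector_def)
  have "0 \<le> \<mu> * Re z" using h(1) abs_ge_zero order_trans by blast
  then have "Re z \<ge> 0" using mu by (simp add: zero_le_mult_iff)
  then have "Re z = 0" using n by simp
  then have "Im z = 0" using h(1) by simp
  then show False using h(2) \<open>Re z = 0\<close> by (simp add: complex_eq_iff)
qed

lemma sec_inv:
  assumes "\<mu> > 0" "z \<in> sector \<mu>"
  shows "1 / cnj z \<in> sector \<mu>"
proof -
  have p: "Re z > 0" by (rule sec_pos[OF assms])
  have h: "\<bar>Im z\<bar> \<le> \<mu> * Re z" using assms(2) by (simp add: sector_def)
  define s where "s = (Re z)\<^sup>2 + (Im z)\<^sup>2"
  have s: "s > 0" using p by (simp add: s_def add_pos_nonneg)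
  have "\<bar>Im z\<bar> / s \<le> \<mu> * Re z / s" using h s by (simp add: divide_right_mono)
  moreover have "1 / cnj z \<noteq> 0" using p by auto
  ultimately show ?thesis
    by (simp add: sector_def Re_divide Im_divide s_def[symmetric] abs_div_pos[OF s] abs_minus_cancel)
qed

theorem proposition3p9:
  fixes A :: "complex^'n^'m" and Z :: "complex^'k^'m"
  assumes "CARD('n) \<le> CARD('m)"
    and "rank A = CARD('n)"
    and "CARD('k) = CARD('m) - CARD('n)"
    and "inj (\<lambda>x. Z *v x)"
    and "col_range Z = corth (col_range A)"
  shows "\<forall>\<mu>>0. chi A \<mu> = chi Z \<mu>"
proof (intro allI impI)
  fix \<mu> :: real assume mu: "\<mu> > 0"
  have injA: "inj ((*v) A)" by (rule rank_inj[OF assms(2)])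
  have injZ: "inj ((*v) Z)" using assms(4) by simp
  define \<phi> :: "complex^'m^'m \<Rightarrow> complex^'m^'m" where
    "\<phi> D = diag_mat (\<chi> i. 1 / cnj (D $ i $ i))" for D
  define fA where "fA D = ereal (opnorm (A ** matrix_inv (ctrans A ** D ** A) ** ctrans A ** D))" for D
  define fZ where "fZ D = ereal (opnorm (Z ** matrix_inv (ctrans Z ** D ** Z) ** ctrans Z ** D))" for D
  have diag_nth: "diag_mat d $ i $ i = d $ i" for d :: "complex^'m" and i
    by (simp add: diag_mat_def)
  have eq: "fA D = fZ (\<phi> D)" if hD: "D \<in> Dset \<mu>" for D
  proof -
    obtain d where D: "D = diag_mat d" and d: "\<forall>i. d $ i \<in> sector \<mu>"
      using hD unfolding Dset_def by blast
    have "\<phi> D = diag_mat (\<chi> i. 1 / cnj (d $ i))" by (simp add: \<phi>_def D diag_nth)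
    moreover have "opnorm (A ** matrix_inv (ctrans A ** diag_mat d ** A) ** ctrans A ** diag_mat d)
       = opnorm (Z ** matrix_inv (ctrans Z ** diag_mat (\<chi> i. 1 / cnj (d $ i)) ** Z) ** ctrans Z ** diag_mat (\<chi> i. 1 / cnj (d $ i)))"
      by (rule key[OF injA injZ assms(5)]) (auto intro: sec_pos[OF mu] d[rule_format])
    ultimately show ?thesis by (simp add: fA_def fZ_def D)
  qed
  have inS: "\<phi> D \<in> Dset \<mu> \<and> \<phi> (\<phi> D) = D" if hD: "D \<in> Dset \<mu>" for D
  proof -
    obtain d where D: "D = diag_mat d" and d: "\<forall>i. d $ i \<in> sector \<mu>"
      using hD unfolding Dset_def by blast
    have "\<phi> (\<phi> D) = D"
      by (simp add: \<phi>_def D diag_nth)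
    moreover have "\<phi> D \<in> Dset \<mu>"
      unfolding Dset_def using d sec_inv[OF mu]
      by (auto simp: \<phi>_def D diag_nth)
    ultimately show ?thesis by simp
  qed
  have img: "\<phi> ` Dset \<mu> = Dset \<mu>"
  proof
    show "\<phi> ` Dset \<mu> \<subseteq> Dset \<mu>" using inS by auto
    show "Dset \<mu> \<subseteq> \<phi> ` Dset \<mu>"
    proof
      fix D :: "complex^'m^'m" assume "D \<in> Dset \<mu>"
      then show "D \<in> \<phi> ` Dset \<mu>" using inS by (metis image_eqI)
    qed
  qed
  have "chi A \<mu> = (SUP D\<in>Dset \<mu>. fA D)" by (simp add: chi_def fA_def)
  also have "\<dots> = (SUP D\<in>Dset \<mu>. fZ (\<phi> D))" by (rule SUP_cong) (simp_all add: eq)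
  also have "\<dots> = (SUP D\<in>\<phi> ` Dset \<mu>. fZ D)" by (simp add: image_image)
  also have "\<dots> = chi Z \<mu>" by (simp add: img chi_def fZ_def)
  finally show "chi A \<mu> = chi Z \<mu>" .
qed

end
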